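(* Let $\nabla:\Omega(A)\to\Omega(A)\otimes_A\Omega(A)$ be a module connection with associated affine connection $(\mathsf K_\nabla,\mathsf H_\nabla)$ and torsion $\mathsf V$. Then for all $a\in A$, $2\,\widehat\nabla(\mathsf d(a))=\widehat\phi(\mathsf V(\mathsf d(a)))$.
   Context: Fix a commutative ring $R$ and a commutative $R$-algebra $A$; $\Omega(A)$ is the Kähler module of $A$ over $R$ with universal derivation $\mathsf d$, and $\Omega^2(A)=\Omega(A)\wedge_A\Omega(A)$. A module connection on $\Omega(A)$ is an $R$-linear $\nabla:\Omega(A)\to\Omega(A)\otimes_A\Omega(A)$ with $\nabla(a\alpha)=a\nabla(\alpha)+\mathsf d(a)\otimes\alpha$. $\mathsf T(A)=\mathrm{Sym}_A(\Omega(A))$ (which equals the symmetric algebra $\mathsf S_A(\Omega(A))$), $\mathsf T^2(A)=\mathsf T(\mathsf T(A))$ with universal derivation $\mathsf d':\mathsf T(A)\to\mathsf T^2(A)$, generated over $A$ by $\mathsf d(a),\mathsf d'(a),\mathsf d'\mathsf d(a)$; $\mathsf c_A:\mathsf T^2(A)\to\mathsf T^2(A)$ is the algebra map $a\mapsto a$, $\mathsf d(a)\mapsto\mathsf d'(a)$, $\mathsf d'(a)\mapsto\mathsf d(a)$, $\mathsf d'\mathsf d(a)\mapsto\mathsf d'\mathsf d(a)$. The associated affine connection (a tangent category connection on the tangent bundle of $A$ in affine schemes) has vertical part the algebra map $\mathsf K_\nabla:\mathsf T(A)\to\mathsf T^2(A)$, $a\mapsto a$, $\mathsf d(a)\mapsto\mathsf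 d'\mathsf d(a)-U'(\nabla(\mathsf d a))$, and horizontal part $\mathsf H_\nabla:\mathsf T^2(A)\to\mathsf T(A)\otimes_A\mathsf T(A)$ with $\mathsf H_\nabla(\mathsf d'\mathsf d(a))=\nabla(\mathsf d(a))$, where $U':\mathsf T(A)\otimes_A\mathsf T(A)\to\mathsf T^2(A)$ is the algebra map $w\otimes v\mapsto\mathsf T(\mathsf p_A)(w)\,v$ with $\mathsf T(\mathsf p_A)(a)=a$, $\mathsf T(\mathsf p_A)(\mathsf d a)=\mathsf d'(a)$ (so $\mathsf d(b)\otimes\mathsf d(c)\mapsto\mathsf d'(b)\mathsf d(c)$). The torsion of this affine connection (computed from the horizontal connection) is the algebra map $\mathsf V:\mathsf T(A)\to\mathsf T^2(A)$ with $\mathsf V(a)=a$ and $\mathsf V(\mathsf d(a))=\mathsf c_A\big(U'(\mathsf H_\nabla(\mathsf d'\mathsf d a))\big)-U'\big(\mathsf H_\nabla(\mathsf c_A(\mathsf d'\mathsf d a))\big)$; the connection is torsion-free if $\mathsf V(\mathsf d(a))=0$ for all $a\in A$. The torsion of $\nabla$ is $\widehat\nabla=\omega\circ\nabla:\Omega(A)\to\Omega^2(A)$ with $\omega(\alpha\otimes\beta)=\alpha\wedge\beta$. The map $\widehat\phi:\mathsf T^2(A)\to\Omega^2(A)$ is the additive map sending each monomial of the form $a\,\mathsf d(b)\mathsf d'(c)$ ($a,b,c\in A$) to $a\,\mathsf d(b)\wedge\mathsf d(c)$ and all monomials of other forms to $0$. *)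

theory Defs
  imports Main "HOL.Modules" "HOL-Library.Poly_Mapping"
begin

text \<open>
  Concrete presentations (by generators and relations) of the objects in the statement.
  A is a type 'a :: comm_ring_1, R a type 'r :: comm_ring_1, and the R-algebra structure
  is a ring homomorphism f :: 'r => 'a.  All objects are realised inside one polynomial
  ring over A whose variables are symbols
     D a   (the element d(a)),   D' a  (the element d'(a)),   DD a  (the element d'd(a)),
     L a   (left tensor factor d(a) in T(A) (x)_A T(A) and in Omega(A) (x)_A Omega(A)).
  The right tensor factor d(c) is written with the symbol D c.
  Elements of the quotient objects are represented by polynomials; equality in the
  quotient object is congruence modulo the relevant submodule / ideal.
\<close>

datatype 'a sym = D 'a | D' 'a | DD 'a | L 'a

type_synonym 'a pol = "('a sym \<Rightarrow>\<^sub>0 nat) \<Rightarrow>\<^sub>0 'a"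

definition Cst :: "'a::comm_ring_1 \<Rightarrow> 'a pol" where
  "Cst a = Poly_Mapping.single 0 a"

definition Var :: "'a sym \<Rightarrow> 'a::comm_ring_1 pol" where
  "Var v = Poly_Mapping.single (Poly_Mapping.single v 1) 1"

definition Aspan :: "'a::comm_ring_1 pol set \<Rightarrow> 'a pol set" where
  "Aspan G = module.span (\<lambda>a p. Cst a * p) G"

definition Ideal :: "'a::comm_ring_1 pol set \<Rightarrow> 'a pol set" where
  "Ideal G = module.span (*) G"

definition peval :: "('a sym \<Rightarrow> 'a::comm_ring_1 pol) \<Rightarrow> 'a pol \<Rightarrow> 'a pol" where
  "peval \<sigma> p = (\<Sum>m\<in>Poly_Mapping.keys p.
       Cst (Poly_Mapping.lookup p m) *
       (\<Prod>v\<in>Poly_Mapping.keys m. \<sigma> v ^ Poly_Mapping.lookup m v))"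

definition ring_hom_fun :: "('r::comm_ring_1 \<Rightarrow> 'a::comm_ring_1) \<Rightarrow> bool" where
  "ring_hom_fun f \<longleftrightarrow> f 1 = 1 \<and> (\<forall>x y. f (x + y) = f x + f y) \<and> (\<forall>x y. f (x * y) = f x * f y)"

definition kahler_rels :: "('r \<Rightarrow> 'a::comm_ring_1) \<Rightarrow> ('a \<Rightarrow> 'a sym) \<Rightarrow> 'a pol set" where
  "kahler_rels f tag =
     {Var (tag (a + b)) - Var (tag a) - Var (tag b) | a b. True}
   \<union> {Var (tag (a * b)) - Cst a * Var (tag b) - Cst b * Var (tag a) | a b. True}
   \<union> {Var (tag (f r)) | r. True}"

text \<open>Relations for d'd coming from applying d' to the Kaehler relations of T(A).\<close>
definition dd_rels :: "('r \<Rightarrow> 'a::comm_ring_1) \<Rightarrow> 'a pol set" where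
  "dd_rels f =
     {Var (DD (a + b)) - Var (DD a) - Var (DD b) | a b. True}
   \<union> {Var (DD (a * b)) - (Var (D' a) * Var (D b) + Cst a * Var (DD b)
                           + Var (D' b) * Var (D a) + Cst b * Var (DD a)) | a b. True}
   \<union> {Var (DD (f r)) | r. True}"

text \<open>Omega(A): A-linear combinations of the symbols d(a), modulo the Kaehler relations.\<close>
definition Omega_reps :: "'a::comm_ring_1 pol set" where
  "Omega_reps = Aspan (range (\<lambda>a. Var (D a)))"

definition Omega_rel :: "('r \<Rightarrow> 'a::comm_ring_1) \<Rightarrow> 'a pol set" where
  "Omega_rel f = Aspan (kahler_rels f D)"

text \<open>Omega(A) (x)_A Omega(A): A-combinations of d(b) (x) d(c) = L b * D c, modulo the
  relations of either factor.\<close>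
definition tens_reps :: "'a::comm_ring_1 pol set" where
  "tens_reps = Aspan {Var (L b) * Var (D c) | b c. True}"

definition tens_rel_gens :: "('r \<Rightarrow> 'a::comm_ring_1) \<Rightarrow> 'a pol set" where
  "tens_rel_gens f = {g * Var (D c) | g c. g \<in> kahler_rels f L}
                   \<union> {Var (L b) * g | b g. g \<in> kahler_rels f D}"

definition tens_rel :: "('r \<Rightarrow> 'a::comm_ring_1) \<Rightarrow> 'a pol set" where
  "tens_rel f = Aspan (tens_rel_gens f)"

text \<open>Omega^2(A) = Omega(A) wedge Omega(A): quotient of Omega (x) Omega by the span of all
  alpha (x) alpha, i.e. by the span of d(b)(x)d(b) and d(b)(x)d(c) + d(c)(x)d(b).
  The map omega(alpha (x) beta) = alpha wedge beta is the identity on representatives.\<close>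
definition wedge_rel :: "('r \<Rightarrow> 'a::comm_ring_1) \<Rightarrow> 'a pol set" where
  "wedge_rel f = Aspan (tens_rel_gens f
      \<union> {Var (L b) * Var (D b) | b. True}
      \<union> {Var (L b) * Var (D c) + Var (L c) * Var (D b) | b c. True})"

text \<open>T(A) (x)_A T(A) = Sym(Omega) (x) Sym(Omega): polynomials in L, D modulo the ideal
  generated by the Kaehler relations of both factors.\<close>
definition TT_ideal :: "('r \<Rightarrow> 'a::comm_ring_1) \<Rightarrow> 'a pol set" where
  "TT_ideal f = Ideal (kahler_rels f L \<union> kahler_rels f D)"

text \<open>T^2(A) = T(T(A)): polynomials in D, D', DD modulo the ideal of relations.\<close>
definition T2_poly :: "'a::comm_ring_1 pol \<Rightarrow> bool" where
  "T2_poly p \<longleftrightarrow> (\<forall>m\<in>Poly_Mapping.keys p. \<forall>v\<in>Poly_Mapping.keys m. \<forall>b. v \<noteq> L b)"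

definition T2_ideal :: "('r \<Rightarrow> 'a::comm_ring_1) \<Rightarrow> 'a pol set" where
  "T2_ideal f = Ideal (kahler_rels f D \<union> kahler_rels f D' \<union> dd_rels f)"

definition cA :: "'a::comm_ring_1 pol \<Rightarrow> 'a pol" where
  "cA = peval (\<lambda>v. case v of D a \<Rightarrow> Var (D' a) | D' a \<Rightarrow> Var (D a)
                              | DD a \<Rightarrow> Var (DD a) | L a \<Rightarrow> Var (L a))"

text \<open>U' : T(A) (x) T(A) -> T^2(A), w (x) v |-> T(p_A)(w) v, i.e. L a |-> d'(a), D a |-> d(a).\<close>
definition Uprime :: "'a::comm_ring_1 pol \<Rightarrow> 'a pol" where
  "Uprime = peval (\<lambda>v. case v of L a \<Rightarrow> Var (D' a) | _ \<Rightarrow> Var v)"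

definition phi_hat :: "'a::comm_ring_1 pol \<Rightarrow> 'a pol" where
  "phi_hat p = (\<Sum>m\<in>Poly_Mapping.keys p.
      \<Sum>(b, c)\<in>{(b, c). m = Poly_Mapping.single (D b) 1 + Poly_Mapping.single (D' c) 1}.
         Cst (Poly_Mapping.lookup p m) * Var (L b) * Var (D c))"

definition module_connection :: "('r \<Rightarrow> 'a::comm_ring_1) \<Rightarrow> ('a pol \<Rightarrow> 'a pol) \<Rightarrow> bool" where
  "module_connection f nabla \<longleftrightarrow>
     (\<forall>p\<in>Omega_reps. nabla p \<in> tens_reps) \<and>
     (\<forall>p\<in>Omega_reps. \<forall>q\<in>Omega_reps. p - q \<in> Omega_rel f \<longrightarrow> nabla p - nabla q \<in> tens_rel f) \<and>
     (\<forall>p\<in>Omega_reps. \<forall>q\<in>Omega_reps. nabla (p + q) - (nabla p + nabla q) \<in> tens_rel f) \<and>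
     (\<forall>r. \<forall>p\<in>Omega_reps. nabla (Cst (f r) * p) - Cst (f r) * nabla p \<in> tens_rel f) \<and>
     (\<forall>a. \<forall>p\<in>Omega_reps. nabla (Cst a * p) - (Cst a * nabla p + Var (L a) * p) \<in> tens_rel f)"

definition horizontal_part :: "('r \<Rightarrow> 'a::comm_ring_1) \<Rightarrow> ('a pol \<Rightarrow> 'a pol) \<Rightarrow> ('a pol \<Rightarrow> 'a pol) \<Rightarrow> bool" where
  "horizontal_part f nabla H \<longleftrightarrow>
     (\<forall>p q. T2_poly p \<and> T2_poly q \<and> p - q \<in> T2_ideal f \<longrightarrow> H p - H q \<in> TT_ideal f) \<and>
     (\<forall>a. H (Var (DD a)) - nabla (Var (D a)) \<in> TT_ideal f)"

definition torsion_V :: "('a::comm_ring_1 pol \<Rightarrow> 'a pol) \<Rightarrow> 'a \<Rightarrow> 'a pol" where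
  "torsion_V H a = cA (Uprime (H (Var (DD a)))) - Uprime (H (cA (Var (DD a))))"

text \<open>Torsion of nabla: nabla-hat = omega o nabla (omega is the identity on representatives,
  the target being read in Omega^2(A), i.e. modulo wedge_rel).\<close>
definition nabla_hat :: "('a::comm_ring_1 pol \<Rightarrow> 'a pol) \<Rightarrow> 'a pol \<Rightarrow> 'a pol" where
  "nabla_hat nabla p = nabla p"

definition wedge_eq :: "('r \<Rightarrow> 'a::comm_ring_1) \<Rightarrow> 'a pol \<Rightarrow> 'a pol \<Rightarrow> bool" where
  "wedge_eq f p q \<longleftrightarrow> p - q \<in> wedge_rel f"

end

theory Submission
  imports Defs
begin


lemma Cst_add: "Cst (a + b) = Cst a + Cst b" by (simp add: Cst_def single_add)
lemma Cst_mult: "Cst (a * b) = Cst a * Cst b" by (simp add: Cst_def mult_single)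
lemma Cst_one[simp]: "Cst 1 = 1" by (simp add: Cst_def)
lemma Cst_zero[simp]: "Cst 0 = 0" by (simp add: Cst_def)

definition mon :: "('a sym \<Rightarrow> 'a::comm_ring_1 pol) \<Rightarrow> ('a sym \<Rightarrow>\<^sub>0 nat) \<Rightarrow> 'a pol" where
  "mon \<sigma> m = (\<Prod>v\<in>Poly_Mapping.keys m. \<sigma> v ^ Poly_Mapping.lookup m v)"

lemma mon_superset:
  assumes "finite S" "Poly_Mapping.keys m \<subseteq> S"
  shows "mon \<sigma> m = (\<Prod>v\<in>S. \<sigma> v ^ Poly_Mapping.lookup m v)"
  unfolding mon_def using assms
  by (intro prod.mono_neutral_left) (auto simp: in_keys_iff)

lemma mon_add: "mon \<sigma> (m + n) = mon \<sigma> m * mon \<sigma> n"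
proof -
  let ?S = "Poly_Mapping.keys m \<union> Poly_Mapping.keys n"
  have "mon \<sigma> (m + n) = (\<Prod>v\<in>?S. \<sigma> v ^ Poly_Mapping.lookup (m+n) v)"
    using keys_add[of m n] by (intro mon_superset) auto
  also have "\<dots> = (\<Prod>v\<in>?S. \<sigma> v ^ Poly_Mapping.lookup m v * \<sigma> v ^ Poly_Mapping.lookup n v)"
    by (simp add: lookup_add power_add)
  also have "\<dots> = mon \<sigma> m * mon \<sigma> n"
    by (simp add: prod.distrib mon_superset[of ?S])
  finally show ?thesis .
qed

lemma mon_zero[simp]: "mon \<sigma> 0 = 1" by (simp add: mon_def)

lemma mon_single1[simp]: "mon \<sigma> (Poly_Mapping.single v 1) = \<sigma> v" by (simp add: mon_def)

lemma peval_mon: "peval \<sigma> p = (\<Sum>m\<in>Poly_Mapping.keys p. Cst (Poly_Mapping.lookup p m) * mon \<sigma> m)"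
  by (simp add: peval_def mon_def)

lemma peval_superset:
  assumes "finite S" "Poly_Mapping.keys p \<subseteq> S"
  shows "peval \<sigma> p = (\<Sum>m\<in>S. Cst (Poly_Mapping.lookup p m) * mon \<sigma> m)"
  unfolding peval_mon using assms
  by (intro sum.mono_neutral_left) (auto simp: in_keys_iff)

lemma peval_add: "peval \<sigma> (p + q) = peval \<sigma> p + peval \<sigma> q"
proof -
  let ?S = "Poly_Mapping.keys p \<union> Poly_Mapping.keys q"
  show ?thesis
    using keys_add[of p q]
    by (simp add: peval_superset[of ?S] lookup_add Cst_add distrib_right sum.distrib)
qed

interpretation peval_add: additive "peval \<sigma>"
  by unfold_locales (rule peval_add)

lemma peval_single: "peval \<sigma> (Poly_Mapping.single m e) = Cst e * mon \<sigma> m"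
  by (simp add: peval_mon)

lemma poly_expand: "p = (\<Sum>m\<in>Poly_Mapping.keys p. Poly_Mapping.single m (Poly_Mapping.lookup p m))"
  by (rule poly_mapping_eqI) (simp add: lookup_sum lookup_single when_def in_keys_iff)

lemma peval_mult: "peval \<sigma> (p * q) = peval \<sigma> p * peval \<sigma> q"
proof -
  let ?P = "Poly_Mapping.keys p" and ?Q = "Poly_Mapping.keys q"
  have "p * q = (\<Sum>m\<in>?P. \<Sum>n\<in>?Q. Poly_Mapping.single m (Poly_Mapping.lookup p m) * Poly_Mapping.single n (Poly_Mapping.lookup q n))"
    by (subst poly_expand[of p], subst poly_expand[of q]) (simp add: sum_product)
  then have "peval \<sigma> (p * q) = (\<Sum>m\<in>?P. \<Sum>n\<in>?Q. (Cst (Poly_Mapping.lookup p m) * mon \<sigma> m) * (Cst (Poly_Mapping.lookup q n) * mon \<sigma> n))"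
    by (simp add: peval_add.sum mult_single peval_single mon_add Cst_mult ac_simps)
  also have "\<dots> = peval \<sigma> p * peval \<sigma> q"
    by (simp add: peval_mon sum_product)
  finally show ?thesis .
qed

lemma peval_Var[simp]: "peval \<sigma> (Var v) = \<sigma> v"
  by (simp add: Var_def peval_single mon_def)

lemma peval_Cst[simp]: "peval \<sigma> (Cst c) = Cst c"
  by (simp add: Cst_def peval_single)



definition inner :: "('a sym \<Rightarrow>\<^sub>0 nat) \<Rightarrow> 'a::comm_ring_1 \<Rightarrow> 'a pol" where
  "inner m e = (\<Sum>(b, c)\<in>{(b, c). m = Poly_Mapping.single (D b) 1 + Poly_Mapping.single (D' c) 1}.
         Cst e * Var (L b) * Var (D c))"

lemma phi_inner: "phi_hat p = (\<Sum>m\<in>Poly_Mapping.keys p. inner m (Poly_Mapping.lookup p m))"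
  by (simp add: phi_hat_def inner_def)

lemma inner_zero[simp]: "inner m 0 = 0" by (simp add: inner_def)

lemma inner_add: "inner m (e1 + e2) = inner m e1 + inner m e2"
  by (simp add: inner_def Cst_add distrib_right sum.distrib split_def)

lemma phi_superset:
  assumes "finite S" "Poly_Mapping.keys p \<subseteq> S"
  shows "phi_hat p = (\<Sum>m\<in>S. inner m (Poly_Mapping.lookup p m))"
  unfolding phi_inner using assms
  by (intro sum.mono_neutral_left) (auto simp: in_keys_iff)

lemma phi_add: "phi_hat (p + q) = phi_hat p + phi_hat q"
proof -
  let ?S = "Poly_Mapping.keys p \<union> Poly_Mapping.keys q"
  show ?thesis
    using keys_add[of p q]
    by (simp add: phi_superset[of ?S] lookup_add inner_add sum.distrib)
qed

interpretation phi_add: additive phi_hat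
  by unfold_locales (rule phi_add)

lemma phi_single: "phi_hat (Poly_Mapping.single m e) = inner m e"
  by (simp add: phi_inner)

abbreviation dl :: "'a sym \<Rightarrow> ('a sym \<Rightarrow>\<^sub>0 nat)" where "dl v \<equiv> Poly_Mapping.single v 1"

lemma pair_eq: "dl (D b) + dl (D' c) = dl (D b') + dl (D' c') \<longleftrightarrow> b = b' \<and> c = c'"
proof
  assume h: "dl (D b) + dl (D' c) = dl (D b') + dl (D' c')"
  have "Poly_Mapping.lookup (dl (D b) + dl (D' c)) (D b) = Poly_Mapping.lookup (dl (D b') + dl (D' c')) (D b)"
    using h by simp
  hence "b = b'" by (auto simp: lookup_add lookup_single when_def split: if_splits)
  moreover have "Poly_Mapping.lookup (dl (D b) + dl (D' c)) (D' c) = Poly_Mapping.lookup (dl (D b') + dl (D' c')) (D' c)"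
    using h by simp
  hence "c = c'" by (auto simp: lookup_add lookup_single when_def split: if_splits)
  ultimately show "b = b' \<and> c = c'" ..
qed simp

lemma inner_pair: "inner (dl (D b) + dl (D' c)) e = Cst e * Var (L b) * Var (D c)"
proof -
  have "{(b', c'). dl (D b) + dl (D' c) = dl (D b') + dl (D' c')} = {(b, c)}"
  proof (intro set_eqI iffI)
    fix x assume "x \<in> {(b', c'). dl (D b) + dl (D' c) = dl (D b') + dl (D' c')}"
    then obtain b' c' where x: "x = (b', c')" and eq: "dl (D b) + dl (D' c) = dl (D b') + dl (D' c')"
      by blast
    from eq have "b = b' \<and> c = c'" by (simp only: pair_eq)
    with x show "x \<in> {(b, c)}" by simp
  qed simp
  thus ?thesis by (simp add: inner_def)
qed

lemma inner_none: "(\<And>b c. m \<noteq> dl (D b) + dl (D' c)) \<Longrightarrow> inner m e = 0"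
  by (simp add: inner_def)

lemma shiftD: "m + dl (D y) = dl (D b) + dl (D' c) \<Longrightarrow> m = dl (D' c)"
proof -
  assume h: "m + dl (D y) = dl (D b) + dl (D' c)"
  have "Poly_Mapping.lookup (m + dl (D y)) (D y) = Poly_Mapping.lookup (dl (D b) + dl (D' c)) (D y)"
    using h by simp
  hence "y = b" by (auto simp: lookup_add lookup_single when_def split: if_splits)
  hence "m + dl (D y) = dl (D' c) + dl (D y)" using h by (simp add: add.commute)
  thus ?thesis by simp
qed

lemma shiftD': "m + dl (D' y) = dl (D b) + dl (D' c) \<Longrightarrow> m = dl (D b)"
proof -
  assume h: "m + dl (D' y) = dl (D b) + dl (D' c)"
  have "Poly_Mapping.lookup (m + dl (D' y)) (D' y) = Poly_Mapping.lookup (dl (D b) + dl (D' c)) (D' y)"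
    using h by simp
  hence "y = c" by (auto simp: lookup_add lookup_single when_def split: if_splits)
  hence "m + dl (D' y) = dl (D b) + dl (D' y)" using h by (simp add: add.commute)
  thus ?thesis by simp
qed

lemma innerD_yes: "inner (dl (D' c) + dl (D y)) e = Cst e * Var (L y) * Var (D c)"
  using inner_pair[of y c e] by (simp add: add.commute)

lemma innerD_no: assumes n: "\<And>c. m \<noteq> dl (D' c)" shows "inner (m + dl (D y)) e = 0"
proof (rule inner_none)
  fix b c show "m + dl (D y) \<noteq> dl (D b) + dl (D' c)"
  proof
    assume "m + dl (D y) = dl (D b) + dl (D' c)"
    hence "m = dl (D' c)" by (rule shiftD)
    with n show False by blast
  qed
qed

lemma innerD'_yes: "inner (dl (D b) + dl (D' y)) e = Cst e * Var (L b) * Var (D y)"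
  by (rule inner_pair)

lemma innerD'_no: assumes n: "\<And>b. m \<noteq> dl (D b)" shows "inner (m + dl (D' y)) e = 0"
proof (rule inner_none)
  fix b c show "m + dl (D' y) \<noteq> dl (D b) + dl (D' c)"
  proof
    assume "m + dl (D' y) = dl (D b) + dl (D' c)"
    hence "m = dl (D b)" by (rule shiftD')
    with n show False by blast
  qed
qed

lemma single_Var: "Poly_Mapping.single m e * Var v = Poly_Mapping.single (m + dl v) e"
  by (simp add: Var_def mult_single)

lemma single_CVar: "Poly_Mapping.single m e * (Cst k * Var v) = Poly_Mapping.single (m + dl v) (e * k)"
  by (simp add: Var_def Cst_def mult_single)



lemma modC: "module (\<lambda>a (p::'a::comm_ring_1 pol). Cst a * p)"
  by unfold_locales (simp_all add: Cst_add Cst_mult algebra_simps)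

lemma modI: "module ((*) :: 'a::comm_ring_1 pol \<Rightarrow> 'a pol \<Rightarrow> 'a pol)"
  by unfold_locales (simp_all add: algebra_simps)

lemma Aspan_sb: "x \<in> G \<Longrightarrow> Cst e * x \<in> Aspan G"
  unfolding Aspan_def by (intro module.span_scale[OF modC] module.span_base[OF modC])

lemma Aspan_zero: "0 \<in> Aspan G"
  unfolding Aspan_def by (rule module.span_zero[OF modC])

lemma Aspan_add: "x \<in> Aspan G \<Longrightarrow> y \<in> Aspan G \<Longrightarrow> x + y \<in> Aspan G"
  unfolding Aspan_def by (rule module.span_add[OF modC])

lemma Aspan_diff: "x \<in> Aspan G \<Longrightarrow> y \<in> Aspan G \<Longrightarrow> x - y \<in> Aspan G"
  unfolding Aspan_def by (rule module.span_diff[OF modC])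

lemma Aspan_sum: "(\<And>x. x \<in> A \<Longrightarrow> g x \<in> Aspan G) \<Longrightarrow> sum g A \<in> Aspan G"
  unfolding Aspan_def by (rule module.span_sum[OF modC])

lemma Aspan_mono: "G \<subseteq> G' \<Longrightarrow> Aspan G \<subseteq> Aspan G'"
  unfolding Aspan_def by (rule module.span_mono[OF modC])

lemma phi3a: "phi_hat (Poly_Mapping.single m e * (Var x - Var y - Var z)) = inner (m + dl x) e - inner (m + dl y) e - inner (m + dl z) e"
proof -
  have "Poly_Mapping.single m e * (Var x - Var y - Var z) = Poly_Mapping.single (m + dl x) e - Poly_Mapping.single (m + dl y) e - Poly_Mapping.single (m + dl z) e"
    by (simp only: right_diff_distrib single_Var)
  thus ?thesis by (simp only: phi_add.diff phi_single)
qed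

lemma phi3b: "phi_hat (Poly_Mapping.single m e * (Var x - Cst k1 * Var y - Cst k2 * Var z)) = inner (m + dl x) e - inner (m + dl y) (e * k1) - inner (m + dl z) (e * k2)"
proof -
  have "Poly_Mapping.single m e * (Var x - Cst k1 * Var y - Cst k2 * Var z) = Poly_Mapping.single (m + dl x) e - Poly_Mapping.single (m + dl y) (e*k1) - Poly_Mapping.single (m + dl z) (e*k2)"
    by (simp only: right_diff_distrib single_Var single_CVar)
  thus ?thesis by (simp only: phi_add.diff phi_single)
qed

lemma phi1: "phi_hat (Poly_Mapping.single m e * Var x) = inner (m + dl x) e"
  by (simp only: single_Var phi_single)

lemma phiD_gen:
  assumes h: "h \<in> kahler_rels f D"
  shows "phi_hat (Poly_Mapping.single m e * h) \<in> tens_rel f"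
proof (cases "\<exists>c. m = dl (D' c)")
  case True
  then obtain c where m: "m = dl (D' c)" by blast
  have gen: "g \<in> kahler_rels f L \<Longrightarrow> Cst e * (g * Var (D c)) \<in> tens_rel f" for g
    unfolding tens_rel_def by (rule Aspan_sb) (auto simp: tens_rel_gens_def)
  have A: "phi_hat (Poly_Mapping.single m e * (Var (D (a+b)) - Var (D a) - Var (D b))) \<in> tens_rel f" for a b
  proof -
    have "phi_hat (Poly_Mapping.single m e * (Var (D (a+b)) - Var (D a) - Var (D b)))
       = Cst e * ((Var (L (a+b)) - Var (L a) - Var (L b)) * Var (D c))"
      by (simp only: phi3a m innerD_yes) (simp add: algebra_simps)
    thus ?thesis by (simp only:) (rule gen, auto simp: kahler_rels_def)
  qed
  have B: "phi_hat (Poly_Mapping.single m e * (Var (D (a*b)) - Cst a * Var (D b) - Cst b * Var (D a))) \<in> tens_rel f" for a b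
  proof -
    have "phi_hat (Poly_Mapping.single m e * (Var (D (a*b)) - Cst a * Var (D b) - Cst b * Var (D a)))
       = Cst e * ((Var (L (a*b)) - Cst a * Var (L b) - Cst b * Var (L a)) * Var (D c))"
      by (simp only: phi3b m innerD_yes) (simp add: Cst_mult algebra_simps)
    thus ?thesis by (simp only:) (rule gen, auto simp: kahler_rels_def)
  qed
  have C: "phi_hat (Poly_Mapping.single m e * Var (D (f r))) \<in> tens_rel f" for r
  proof -
    have "phi_hat (Poly_Mapping.single m e * Var (D (f r))) = Cst e * (Var (L (f r)) * Var (D c))"
      by (simp only: phi1 m innerD_yes) (simp add: algebra_simps)
    thus ?thesis by (simp only:) (rule gen, auto simp: kahler_rels_def)
  qed
  from h A B C show ?thesis unfolding kahler_rels_def by auto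
next
  case False
  hence n: "\<And>c. m \<noteq> dl (D' c)" by blast
  from h have "phi_hat (Poly_Mapping.single m e * h) = 0"
    unfolding kahler_rels_def
    by (auto simp only: phi3a phi3b phi1 innerD_no[OF n] diff_zero)
  thus ?thesis by (simp add: tens_rel_def Aspan_zero)
qed

lemma phiD'_gen:
  assumes h: "h \<in> kahler_rels f D'"
  shows "phi_hat (Poly_Mapping.single m e * h) \<in> tens_rel f"
proof (cases "\<exists>b. m = dl (D b)")
  case True
  then obtain b0 where m: "m = dl (D b0)" by blast
  have gen: "g \<in> kahler_rels f D \<Longrightarrow> Cst e * (Var (L b0) * g) \<in> tens_rel f" for g
    unfolding tens_rel_def by (rule Aspan_sb) (auto simp: tens_rel_gens_def)
  have A: "phi_hat (Poly_Mapping.single m e * (Var (D' (a+b)) - Var (D' a) - Var (D' b))) \<in> tens_rel f" for a b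
  proof -
    have "phi_hat (Poly_Mapping.single m e * (Var (D' (a+b)) - Var (D' a) - Var (D' b)))
       = Cst e * (Var (L b0) * (Var (D (a+b)) - Var (D a) - Var (D b)))"
      by (simp only: phi3a m innerD'_yes) (simp add: algebra_simps)
    thus ?thesis by (simp only:) (rule gen, auto simp: kahler_rels_def)
  qed
  have B: "phi_hat (Poly_Mapping.single m e * (Var (D' (a*b)) - Cst a * Var (D' b) - Cst b * Var (D' a))) \<in> tens_rel f" for a b
  proof -
    have "phi_hat (Poly_Mapping.single m e * (Var (D' (a*b)) - Cst a * Var (D' b) - Cst b * Var (D' a)))
       = Cst e * (Var (L b0) * (Var (D (a*b)) - Cst a * Var (D b) - Cst b * Var (D a)))"
      by (simp only: phi3b m innerD'_yes) (simp add: Cst_mult algebra_simps)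
    thus ?thesis by (simp only:) (rule gen, auto simp: kahler_rels_def)
  qed
  have C: "phi_hat (Poly_Mapping.single m e * Var (D' (f r))) \<in> tens_rel f" for r
  proof -
    have "phi_hat (Poly_Mapping.single m e * Var (D' (f r))) = Cst e * (Var (L b0) * Var (D (f r)))"
      by (simp only: phi1 m innerD'_yes) (simp add: algebra_simps)
    thus ?thesis by (simp only:) (rule gen, auto simp: kahler_rels_def)
  qed
  from h A B C show ?thesis unfolding kahler_rels_def by auto
next
  case False
  hence n: "\<And>b. m \<noteq> dl (D b)" by blast
  from h have "phi_hat (Poly_Mapping.single m e * h) = 0"
    unfolding kahler_rels_def
    by (auto simp only: phi3a phi3b phi1 innerD'_no[OF n] diff_zero)
  thus ?thesis by (simp add: tens_rel_def Aspan_zero)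
qed



lemma phi_gen_any:
  assumes h: "h \<in> kahler_rels f D \<union> kahler_rels f D'"
  shows "phi_hat (q * h) \<in> tens_rel f"
proof -
  have "q * h = (\<Sum>m\<in>Poly_Mapping.keys q. Poly_Mapping.single m (Poly_Mapping.lookup q m) * h)"
    by (subst poly_expand[of q]) (simp add: sum_distrib_right)
  hence "phi_hat (q * h) = (\<Sum>m\<in>Poly_Mapping.keys q. phi_hat (Poly_Mapping.single m (Poly_Mapping.lookup q m) * h))"
    by (simp add: phi_add.sum)
  also have "\<dots> \<in> tens_rel f"
    unfolding tens_rel_def
    by (rule Aspan_sum) (use h phiD_gen phiD'_gen in \<open>auto simp: tens_rel_def\<close>)
  finally show ?thesis .
qed

lemma U_L: "h \<in> kahler_rels f L \<Longrightarrow> Uprime h \<in> kahler_rels f D'"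
  unfolding kahler_rels_def Uprime_def
  by (elim UnE CollectE exE conjE; simp add: peval_add.diff peval_mult; blast)

lemma U_D: "h \<in> kahler_rels f D \<Longrightarrow> Uprime h \<in> kahler_rels f D"
  unfolding kahler_rels_def Uprime_def
  by (elim UnE CollectE exE conjE; simp add: peval_add.diff peval_mult; blast)

lemma C_D: "h \<in> kahler_rels f D \<Longrightarrow> cA h \<in> kahler_rels f D'"
  unfolding kahler_rels_def cA_def
  by (elim UnE CollectE exE conjE; simp add: peval_add.diff peval_mult; blast)

lemma C_D': "h \<in> kahler_rels f D' \<Longrightarrow> cA h \<in> kahler_rels f D"
  unfolding kahler_rels_def cA_def
  by (elim UnE CollectE exE conjE; simp add: peval_add.diff peval_mult; blast)

lemma U_mult: "Uprime (p * q) = Uprime p * Uprime q" by (simp add: Uprime_def peval_mult)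
lemma C_mult: "cA (p * q) = cA p * cA q" by (simp add: cA_def peval_mult)
lemma U_add: "Uprime (p + q) = Uprime p + Uprime q" by (simp add: Uprime_def peval_add)
lemma C_add: "cA (p + q) = cA p + cA q" by (simp add: cA_def peval_add)

definition psi :: "'a::comm_ring_1 pol \<Rightarrow> 'a pol" where
  "psi p = phi_hat (cA (Uprime p)) - phi_hat (Uprime p)"

lemma psi_add: "psi (p + q) = psi p + psi q"
  by (simp add: psi_def U_add C_add phi_add)

lemma psi_zero[simp]: "psi 0 = 0"
  by (metis add_cancel_right_right psi_add)

lemma psi_diff: "psi (p - q) = psi p - psi q"
  by (metis add_diff_cancel diff_add_cancel psi_add)

lemma tens_rel_diff: "x \<in> tens_rel f \<Longrightarrow> y \<in> tens_rel f \<Longrightarrow> x - y \<in> tens_rel f"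
  unfolding tens_rel_def by (rule Aspan_diff)

lemma tens_rel_add: "x \<in> tens_rel f \<Longrightarrow> y \<in> tens_rel f \<Longrightarrow> x + y \<in> tens_rel f"
  unfolding tens_rel_def by (rule Aspan_add)

lemma psi_ideal:
  assumes g: "g \<in> TT_ideal f"
  shows "psi g \<in> tens_rel f"
proof -
  have "g \<in> module.span (*) (kahler_rels f L \<union> kahler_rels f D)"
    using g by (simp add: TT_ideal_def Ideal_def)
  thus ?thesis
  proof (rule module.span_induct_alt[OF modI])
    show "psi 0 \<in> tens_rel f" by (simp add: tens_rel_def Aspan_zero)
  next
    fix c x y
    assume x: "x \<in> kahler_rels f L \<union> kahler_rels f D" and y: "psi y \<in> tens_rel f"
    have 1: "cA (Uprime x) \<in> kahler_rels f D \<union> kahler_rels f D'"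
      using x U_L U_D C_D C_D' by blast
    have 2: "Uprime x \<in> kahler_rels f D \<union> kahler_rels f D'"
      using x U_L U_D by blast
    have "psi (c * x) = phi_hat (cA (Uprime c) * cA (Uprime x)) - phi_hat (Uprime c * Uprime x)"
      by (simp add: psi_def U_mult C_mult)
    also have "\<dots> \<in> tens_rel f"
      using phi_gen_any[OF 1] phi_gen_any[OF 2] by (rule tens_rel_diff)
    finally show "psi (c * x + y) \<in> tens_rel f"
      by (simp add: psi_add tens_rel_add y)
  qed
qed

lemma CVV: "Cst k * (Var u * Var v) = Poly_Mapping.single (dl u + dl v) k"
  by (simp add: Cst_def Var_def mult_single)

lemma psi_gen: "psi (Cst k * (Var (L b) * Var (D c))) = Cst k * (Var (L b) * Var (D c)) - Cst k * (Var (L c) * Var (D b))"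
proof -
  have U: "Uprime (Cst k * (Var (L b) * Var (D c))) = Cst k * (Var (D' b) * Var (D c))"
    by (simp add: Uprime_def peval_mult)
  have C: "cA (Cst k * (Var (D' b) * Var (D c))) = Cst k * (Var (D b) * Var (D' c))"
    by (simp add: cA_def peval_mult)
  have p1: "phi_hat (Cst k * (Var (D b) * Var (D' c))) = Cst k * (Var (L b) * Var (D c))"
    by (simp only: CVV phi_single inner_pair mult.assoc)
  have p2: "phi_hat (Cst k * (Var (D' b) * Var (D c))) = Cst k * (Var (L c) * Var (D b))"
    by (simp only: CVV phi_single add.commute[of "dl (D' b)"] inner_pair mult.assoc)
  show ?thesis by (simp only: psi_def U C p1 p2)
qed

lemma psi_N:
  fixes N :: "'a::comm_ring_1 pol"
  assumes N: "N \<in> tens_reps"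
  shows "2 * N - psi N \<in> wedge_rel f"
proof -
  have "N \<in> module.span (\<lambda>a p. Cst a * p) {Var (L b) * Var (D c) | b c. True}"
    using N by (simp add: tens_reps_def Aspan_def)
  thus ?thesis
  proof (rule module.span_induct_alt[OF modC])
    show "2 * 0 - psi 0 \<in> wedge_rel f" by (simp add: wedge_rel_def Aspan_zero)
  next
    fix k :: 'a and x y :: "'a pol"
    assume x: "x \<in> {Var (L b) * Var (D c) | b c. True}" and y: "2 * y - psi y \<in> wedge_rel f"
    then obtain b c where xe: "x = Var (L b) * Var (D c)" by blast
    have "2 * (Cst k * x + y) - psi (Cst k * x + y)
        = Cst k * (Var (L b) * Var (D c) + Var (L c) * Var (D b)) + (2 * y - psi y)"
    proof -
      have "psi (Cst k * x) = Cst k * (Var (L b) * Var (D c)) - Cst k * (Var (L c) * Var (D b))"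
        unfolding xe by (rule psi_gen)
      thus ?thesis by (simp add: psi_add xe algebra_simps)
    qed
    also have "\<dots> \<in> wedge_rel f"
      unfolding wedge_rel_def
      by (rule Aspan_add[OF Aspan_sb]) (use y in \<open>auto simp: wedge_rel_def\<close>)
    finally show "2 * (Cst k * x + y) - psi (Cst k * x + y) \<in> wedge_rel f" .
  qed
qed

theorem mainTheorem14:
  fixes f :: "'r::comm_ring_1 \<Rightarrow> 'a::comm_ring_1"
    and nabla H :: "'a pol \<Rightarrow> 'a pol"
    and a :: 'a
  assumes "ring_hom_fun f"
    and "module_connection f nabla"
    and "horizontal_part f nabla H"
  shows "wedge_eq f (2 * nabla_hat nabla (Var (D a))) (phi_hat (torsion_V H a))"
proof -
  let ?N = "nabla (Var (D a))" and ?X = "H (Var (DD a))"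
  have "Var (D a) \<in> Omega_reps"
    unfolding Omega_reps_def Aspan_def by (rule module.span_base[OF modC]) auto
  hence N: "?N \<in> tens_reps" using assms(2) by (simp add: module_connection_def)
  have XN: "?X - ?N \<in> TT_ideal f" using assms(3) by (simp add: horizontal_part_def)
  have cDD: "cA (Var (DD a)) = Var (DD a)" by (simp add: cA_def)
  have tv: "phi_hat (torsion_V H a) = psi ?X"
    by (simp add: torsion_V_def cDD psi_def phi_add.diff)
  have eq: "2 * ?N - psi ?X = (2 * ?N - psi ?N) - psi (?X - ?N)"
    by (simp add: psi_diff)
  have "tens_rel f \<subseteq> wedge_rel f"
    unfolding tens_rel_def wedge_rel_def by (rule Aspan_mono) auto
  hence "psi (?X - ?N) \<in> wedge_rel f" using psi_ideal[OF XN] by blast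
  hence "2 * ?N - psi ?X \<in> wedge_rel f"
    unfolding eq wedge_rel_def by (rule Aspan_diff[rotated]) (use psi_N[OF N] in \<open>simp add: wedge_rel_def\<close>)
  thus ?thesis by (simp add: wedge_eq_def nabla_hat_def tv)
qed

end
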